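(* For every integer $n\ge 2$, $|PF_{n,n-2}|=n^n-n^{n-2}$.
   Context: For $n\in\mathbb{N}$ let $[n]=\{1,\dots,n\}$ and $PP_n=[n]^n$. For an integer $k\ge 0$, the $k$-Naples parking rule: there are $n$ spots numbered $1,\dots,n$ west to east, initially empty; cars $c_1,\dots,c_n$ arrive in order, car $c_i$ preferring spot $a_i$. If spot $a_i$ is empty, $c_i$ parks there. Otherwise $c_i$ checks spots $a_i-1,\dots,a_i-k$ in this order (skipping those $<1$) and parks in the first empty one; if all are occupied, it drives east and parks in the first empty spot numbered greater than $a_i$, failing to park if none exists. $PF_{n,k}$ is the set of preferences in $PP_n$ for which all cars park. *)

theory Defs
  imports Main "HOL-Library.FuncSet"
begin

text \<open>The k-Naples parking rule. The state is the set of occupied spots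
(or None once some car has failed to park).\<close>

definition naples_step :: "nat \<Rightarrow> nat \<Rightarrow> nat set option \<Rightarrow> nat \<Rightarrow> nat set option" where
  "naples_step n k st a =
     (case st of None \<Rightarrow> None
      | Some Occ \<Rightarrow>
        (if a \<notin> Occ then Some (insert a Occ)
         else if (\<exists>j. 1 \<le> j \<and> j \<le> k \<and> j < a \<and> a - j \<notin> Occ)
           then Some (insert (a - (LEAST j. 1 \<le> j \<and> j \<le> k \<and> j < a \<and> a - j \<notin> Occ)) Occ)
         else if (\<exists>s. a < s \<and> s \<le> n \<and> s \<notin> Occ)
           then Some (insert (LEAST s. a < s \<and> s \<le> n \<and> s \<notin> Occ) Occ)
         else None))"

fun naples_run :: "nat \<Rightarrow> nat \<Rightarrow> (nat \<Rightarrow> nat) \<Rightarrow> nat \<Rightarrow> nat set option" where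
  "naples_run n k alpha 0 = Some {}"
| "naples_run n k alpha (Suc m) = naples_step n k (naples_run n k alpha m) (alpha (Suc m))"

text \<open>PP_n = [n]^n, preferences as extensional functions on the car index set {1..n}.\<close>
definition PP :: "nat \<Rightarrow> (nat \<Rightarrow> nat) set" where
  "PP n = ({1..n} \<rightarrow>\<^sub>E {1..n})"

definition PF :: "nat \<Rightarrow> nat \<Rightarrow> (nat \<Rightarrow> nat) set" where
  "PF n k = {alpha \<in> PP n. naples_run n k alpha n \<noteq> None}"

end

theory Submission
  imports Defs
begin

definition cstep :: "nat \<Rightarrow> nat set \<Rightarrow> nat \<Rightarrow> nat set" where
  "cstep n C a = insert ((a + n - (LEAST d. d < n \<and> (a + n - d) mod n \<notin> C)) mod n) C"

fun crun :: "nat \<Rightarrow> (nat \<Rightarrow> nat) \<Rightarrow> nat \<Rightarrow> nat set" where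
  "crun n b 0 = {}"
| "crun n b (Suc m) = cstep n (crun n b m) (b (Suc m))"

lemma crun_sub: "n > 0 \<Longrightarrow> crun n b m \<subseteq> {..<n}"
  by (induction m) (auto simp: cstep_def)

lemma crun_mono: "crun n b m \<subseteq> crun n b (Suc m)"
  by (auto simp: cstep_def)

lemma crun_cong: "(\<forall>i\<in>{1..m}. b1 i = b2 i) \<Longrightarrow> crun n b1 m = crun n b2 m"
  by (induction m) auto

lemma cstep_wit:
  assumes "C \<subseteq> {..<n}" "card C < n" "a < n"
  shows "\<exists>d. d < n \<and> (a + n - d) mod n \<notin> C"
proof -
  have "C \<noteq> {..<n}" using assms by auto
  then obtain y where y: "y < n" "y \<notin> C" using assms(1) by auto
  show ?thesis
  proof (cases "y \<le> a")
    case True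
    then show ?thesis using y assms by (intro exI[of _ "a - y"]) auto
  next
    case False
    then show ?thesis using y assms by (intro exI[of _ "a + n - y"]) auto
  qed
qed

lemma cstep_new:
  assumes "C \<subseteq> {..<n}" "card C < n" "a < n"
  shows "(LEAST d. d < n \<and> (a + n - d) mod n \<notin> C) < n \<and>
         (a + n - (LEAST d. d < n \<and> (a + n - d) mod n \<notin> C)) mod n \<notin> C"
  using LeastI_ex[OF cstep_wit[OF assms]] by blast

lemma cstep_card:
  assumes "C \<subseteq> {..<n}" "card C < n" "a < n"
  shows "card (cstep n C a) = Suc (card C)"
proof -
  have "finite C" using assms(1) finite_subset by blast
  then show ?thesis using cstep_new[OF assms] by (simp add: cstep_def)
qed

lemma crun_card:
  assumes "\<forall>i\<in>{1..m}. b i < n" "m < n"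
  shows "card (crun n b m) = m"
  using assms
proof (induction m)
  case 0 then show ?case by simp
next
  case (Suc m)
  then have "card (crun n b m) = m" by auto
  moreover have "crun n b m \<subseteq> {..<n}" using crun_sub Suc by auto
  ultimately show ?case using cstep_card[of "crun n b m" n "b (Suc m)"] Suc by auto
qed

lemma rot_inj:
  assumes "y < n" "z < n" "(y + c) mod n = (z + c) mod (n::nat)"
  shows "y = z"
proof -
  { fix y z :: nat assume a: "y < n" "z < n" "(y + c) mod n = (z + c) mod n" "y \<le> z"
    then have "n dvd (z + c) - (y + c)" using mod_eq_dvd_iff_nat[of "y+c" "z+c" n] by auto
    then have "n dvd z - y" by simp
    moreover have "z - y < n" using a by auto
    ultimately have "z - y = 0" using dvd_imp_le by (metis not_less zero_less_iff_neq_zero)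
    then have "y = z" using a by auto }
  then show ?thesis using assms by (metis nat_le_linear)
qed

lemma rot_arith:
  assumes "d \<le> n" "n > (0::nat)"
  shows "((a + c) mod n + n - d) mod n = ((a + n - d) mod n + c) mod n"
proof -
  have "((a + c) mod n + n - d) mod n = ((a + c) mod n + (n - d)) mod n" using assms by simp
  also have "\<dots> = (a + c + (n - d)) mod n" by (simp add: mod_add_left_eq)
  also have "\<dots> = (a + n - d + c) mod n" using assms by (simp add: algebra_simps)
  also have "\<dots> = ((a + n - d) mod n + c) mod n" by (simp add: mod_add_left_eq)
  finally show ?thesis .
qed

lemma cstep_rot:
  assumes "C \<subseteq> {..<n}" "card C < n" "a < n"
  shows "cstep n ((\<lambda>x. (x + c) mod n) ` C) ((a + c) mod n) = (\<lambda>x. (x + c) mod n) ` cstep n C a"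
proof -
  define r where "r = (\<lambda>x. (x + c) mod n)"
  have n0: "n > 0" using assms by auto
  have mem: "r y \<in> r ` C \<longleftrightarrow> y \<in> C" if "y < n" for y
    using that assms(1) rot_inj[of y n] unfolding r_def by auto
  have eqP: "(d < n \<and> ((a + c) mod n + n - d) mod n \<notin> r ` C) = (d < n \<and> (a + n - d) mod n \<notin> C)" for d
  proof (cases "d < n")
    case True
    then have "((a + c) mod n + n - d) mod n = r ((a + n - d) mod n)"
      using rot_arith[of d n a c] n0 unfolding r_def by auto
    then show ?thesis using mem[of "(a + n - d) mod n"] n0 True by auto
  qed auto
  define d0 where "d0 = (LEAST d. d < n \<and> (a + n - d) mod n \<notin> C)"
  have L: "(LEAST d. d < n \<and> ((a + c) mod n + n - d) mod n \<notin> r ` C) = d0"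
    unfolding d0_def using eqP by simp
  have "d0 < n" using cstep_new[OF assms] d0_def by auto
  then have "((a + c) mod n + n - d0) mod n = r ((a + n - d0) mod n)"
    using rot_arith[of d0 n a c] n0 unfolding r_def by auto
  then show ?thesis unfolding cstep_def r_def[symmetric] L d0_def[symmetric] by simp
qed

lemma crun_rot:
  assumes "\<forall>i\<in>{1..m}. b i < n" "m < n"
  shows "crun n (\<lambda>i. (b i + c) mod n) m = (\<lambda>x. (x + c) mod n) ` crun n b m"
  using assms
proof (induction m)
  case 0 then show ?case by simp
next
  case (Suc m)
  then have IH: "crun n (\<lambda>i. (b i + c) mod n) m = (\<lambda>x. (x + c) mod n) ` crun n b m" by auto
  have "card (crun n b m) = m" using crun_card Suc by auto
  moreover have "crun n b m \<subseteq> {..<n}" using crun_sub Suc by auto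
  ultimately show ?case using IH cstep_rot[of "crun n b m" n "b (Suc m)" c] Suc by auto
qed

lemma full_below:
  fixes n a :: nat and L :: "nat set"
  assumes "L \<subseteq> {1..n}" "a \<in> {1..n}" "a \<in> L" "n \<ge> 2"
    and nj: "\<not> (\<exists>j. 1 \<le> j \<and> j \<le> n - 2 \<and> j < a \<and> a - j \<notin> L)"
    and ns: "\<not> (\<exists>s. a < s \<and> s \<le> n \<and> s \<notin> L)"
  shows "{2..n} \<subseteq> L \<and> (a < n \<longrightarrow> {1..n} \<subseteq> L)"
proof -
  have lo: "y \<in> L" if "y < a" "1 \<le> y" "a - y \<le> n - 2" for y :: nat
  proof -
    have "1 \<le> a - y" "a - y < a" "a - (a - y) = y" using that by auto
    then show ?thesis using nj that by metis
  qed
  have hi: "y \<in> L" if "a < y" "y \<le> n" for y using ns that by auto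
  show ?thesis
  proof (intro conjI impI subsetI)
    fix y assume y: "y \<in> {2..n}"
    show "y \<in> L"
    proof -
      consider "y < a" | "y = a" | "a < y" by linarith
      then show ?thesis
      proof cases
        case 1 then show ?thesis using lo[of y] y assms(2) by auto
      qed (use assms hi y in auto)
    qed
  next
    fix y assume an: "a < n" and y: "y \<in> {1..n}"
    consider "y < a" | "y = a" | "a < y" by linarith
    then show "y \<in> L"
    proof cases
      case 1 then show ?thesis using lo[of y] y assms(2) an by auto
    qed (use assms hi y in auto)
  qed
qed

lemma card_ge_sub:
  fixes L :: "nat set"
  assumes "L \<subseteq> {1..n}" "A \<subseteq> L"
  shows "card A \<le> card L"
  using assms by (meson card_mono finite_atLeastAtMost finite_subset)

lemma step_general:
  fixes n a :: nat and L :: "nat set"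
  assumes "L \<subseteq> {1..n}" "card L \<le> n - 2" "a \<in> {1..n}" "n \<ge> 2"
  shows "\<exists>x. naples_step n (n-2) (Some L) a = Some (insert x L) \<and> x \<in> {1..n} \<and> x \<notin> L"
proof (cases "a \<in> L")
  case False then show ?thesis using assms by (auto simp: naples_step_def)
next
  case aL: True
  show ?thesis
  proof (cases "\<exists>j. 1 \<le> j \<and> j \<le> n - 2 \<and> j < a \<and> a - j \<notin> L")
    case True
    define j where "j = (LEAST j. 1 \<le> j \<and> j \<le> n - 2 \<and> j < a \<and> a - j \<notin> L)"
    have P: "1 \<le> j \<and> j \<le> n - 2 \<and> j < a \<and> a - j \<notin> L" using LeastI_ex[OF True] j_def by simp
    have "naples_step n (n-2) (Some L) a = Some (insert (a - j) L)"
      using aL True by (simp add: naples_step_def j_def)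
    moreover have "a - j \<in> {1..n}" using P assms by auto
    ultimately show ?thesis using P by blast
  next
    case nj: False
    show ?thesis
    proof (cases "\<exists>s. a < s \<and> s \<le> n \<and> s \<notin> L")
      case True
      define s where "s = (LEAST s. a < s \<and> s \<le> n \<and> s \<notin> L)"
      have P: "a < s \<and> s \<le> n \<and> s \<notin> L" using LeastI_ex[OF True] s_def by simp
      have "naples_step n (n-2) (Some L) a = Some (insert s L)"
        using aL nj True by (simp add: naples_step_def s_def) blast
      moreover have "s \<in> {1..n}" using P assms by auto
      ultimately show ?thesis using P by blast
    next
      case False
      have "{2..n} \<subseteq> L" using full_below[OF assms(1,3) aL assms(4) nj False] by blast
      then have "card {2..n} \<le> card L" using card_ge_sub assms by blast
      then show ?thesis using assms by simp
    qed
  qed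
qed

lemma step_final:
  fixes n a :: nat and L :: "nat set"
  assumes "L \<subseteq> {1..n}" "card L = n - 1" "a \<in> {1..n}" "n \<ge> 2"
  shows "naples_step n (n-2) (Some L) a = None \<longleftrightarrow> a = n \<and> 1 \<notin> L"
proof
  assume N: "naples_step n (n-2) (Some L) a = None"
  then have aL: "a \<in> L" by (auto simp: naples_step_def split: if_splits)
  have nj: "\<not> (\<exists>j. 1 \<le> j \<and> j \<le> n - 2 \<and> j < a \<and> a - j \<notin> L)"
    using N by (auto simp: naples_step_def split: if_splits)
  have ns: "\<not> (\<exists>s. a < s \<and> s \<le> n \<and> s \<notin> L)"
    using N by (auto simp: naples_step_def split: if_splits)
  have F: "{2..n} \<subseteq> L \<and> (a < n \<longrightarrow> {1..n} \<subseteq> L)" using full_below[OF assms(1,3) aL assms(4) nj ns] .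
  have "a = n"
  proof (rule ccontr)
    assume "a \<noteq> n" then have "{1..n} \<subseteq> L" using F assms by auto
    then have "card {1..n} \<le> card L" using card_ge_sub assms by blast
    then show False using assms by simp
  qed
  moreover have "1 \<notin> L"
  proof
    assume "1 \<in> L"
    moreover have "{1..n} = insert 1 {2..n}" using assms by auto
    ultimately have "{1..n} \<subseteq> L" using F by auto
    then have "card {1..n} \<le> card L" using card_ge_sub assms by blast
    then show False using assms by simp
  qed
  ultimately show "a = n \<and> 1 \<notin> L" by simp
next
  assume A: "a = n \<and> 1 \<notin> L"
  have "L \<subseteq> {2..n}"
  proof
    fix x assume "x \<in> L"
    then have "x \<in> {1..n}" "x \<noteq> 1" using assms A by auto
    then show "x \<in> {2..n}" by auto
  qed
  moreover have "card L = card {2..n}" using assms by simp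
  ultimately have "L = {2..n}" using card_subset_eq by (metis finite_atLeastAtMost)
  then show "naples_step n (n-2) (Some L) a = None" using A assms
    by (auto simp: naples_step_def)
qed

lemma step_match:
  fixes n a :: nat and C :: "nat set"
  assumes C: "C \<subseteq> {..<n}" "0 \<notin> C" "card C \<le> n - 2" and a: "a \<in> {1..n}" and n: "n \<ge> 2"
  shows "naples_step n (n-2) (Some (Suc ` C)) a = Some (Suc ` cstep n C (a - 1))"
proof -
  define a' where "a' = a - 1"
  have aa: "a = Suc a'" using a a'_def by auto
  have a'n: "a' < n" using a aa by auto
  define P where "P = (\<lambda>d. d < n \<and> (a' + n - d) mod n \<notin> C)"
  define d0 where "d0 = Least P"
  have sp: "(a' + n - d) mod n = a' - d" if "d \<le> a'" for d
  proof -
    have e: "a' + n - d = (a' - d) + n" using that by arith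
    have l: "a' - d < n" using a'n by arith
    show ?thesis unfolding e using l by simp
  qed
  have Pa: "P a'" unfolding P_def using a'n C by (simp add: sp)
  have d0le: "d0 \<le> a'" unfolding d0_def using Least_le[of P, OF Pa] .
  have Pd0: "P d0" unfolding d0_def using LeastI[of P, OF Pa] .
  have notC: "a' - d0 \<notin> C" using Pd0 d0le sp unfolding P_def by auto
  have below: "a' - d \<in> C" if "d < d0" for d
  proof -
    have "\<not> P d" using not_less_Least[of d P] that d0_def by auto
    moreover have "d < n" using that d0le a'n by auto
    ultimately show ?thesis unfolding P_def using sp[of d] that d0le by auto
  qed
  have cs: "cstep n C a' = insert (a' - d0) C"
    unfolding cstep_def P_def[symmetric] d0_def[symmetric] using sp d0le by simp
  have memS: "Suc z \<in> Suc ` C \<longleftrightarrow> z \<in> C" for z by auto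
  show ?thesis
  proof (cases "d0 = 0")
    case True
    then have "a \<notin> Suc ` C" using notC aa memS by simp
    then show ?thesis using cs True aa by (simp add: naples_step_def a'_def[symmetric])
  next
    case False
    have aL: "a \<in> Suc ` C" using below[of 0] False aa by simp
    have d0n: "d0 \<le> n - 2"
    proof (rule ccontr)
      assume "\<not> d0 \<le> n - 2"
      then have d0e: "d0 = n - 1" "a' = n - 1" using d0le a'n by auto
      have "{1..<n} \<subseteq> C"
      proof
        fix y assume y: "y \<in> {1..<n}"
        then have "a' - (a' - y) \<in> C" using below[of "a' - y"] d0e by auto
        then show "y \<in> C" using y d0e by auto
      qed
      then have "card {1..<n} \<le> card C" using C by (meson card_mono finite_lessThan finite_subset)
      then show False using C n by simp
    qed
    define Q where "Q = (\<lambda>j. 1 \<le> j \<and> j \<le> n - 2 \<and> j < a \<and> a - j \<notin> Suc ` C)"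
    have e1: "a - d0 = Suc (a' - d0)" using aa d0le by auto
    have Qd0: "Q d0" unfolding Q_def using False d0n d0le aa notC memS e1 by auto
    have Qmin: "d0 \<le> j" if "Q j" for j
    proof (rule ccontr)
      assume "\<not> d0 \<le> j"
      then have "a' - j \<in> C" using below by auto
      moreover have "a - j = Suc (a' - j)" using that aa unfolding Q_def by auto
      ultimately show False using that memS unfolding Q_def by auto
    qed
    have LQ: "Least Q = d0" using Least_equality[of Q d0] Qd0 Qmin by blast
    have ex: "\<exists>j. Q j" using Qd0 by blast
    have "naples_step n (n-2) (Some (Suc ` C)) a = Some (insert (a - d0) (Suc ` C))"
      using aL ex LQ unfolding naples_step_def Q_def by simp
    then show ?thesis using cs a'_def e1 by simp
  qed
qed

lemma inv:
  fixes n m :: nat and alpha b :: "nat \<Rightarrow> nat"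
  assumes n: "n \<ge> 2" and m: "m \<le> n - 1" and al: "\<forall>i\<in>{1..m}. alpha i \<in> {1..n}"
    and bb: "\<forall>i\<in>{1..m}. b i = alpha i - 1"
  shows "\<exists>L. naples_run n (n-2) alpha m = Some L \<and> L \<subseteq> {1..n} \<and> card L = m \<and>
     (0 \<notin> crun n b m \<longrightarrow> L = Suc ` crun n b m) \<and> (0 \<in> crun n b m \<longrightarrow> 1 \<in> L)"
  using m al bb
proof (induction m)
  case 0 show ?case by simp
next
  case (Suc m)
  from Suc.prems have "m \<le> n-1" "\<forall>i\<in>{1..m}. alpha i \<in> {1..n}" "\<forall>i\<in>{1..m}. b i = alpha i - 1"
    by auto
  with Suc.IH obtain L where L: "naples_run n (n-2) alpha m = Some L" "L \<subseteq> {1..n}" "card L = m"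
    "0 \<notin> crun n b m \<longrightarrow> L = Suc ` crun n b m" "0 \<in> crun n b m \<longrightarrow> 1 \<in> L" by blast
  define a where "a = alpha (Suc m)"
  have a: "a \<in> {1..n}" using Suc.prems a_def by auto
  have ba: "b (Suc m) = a - 1" using Suc.prems a_def by auto
  have cm: "card L \<le> n - 2" using L Suc.prems by auto
  define C where "C = crun n b m"
  have Csub: "C \<subseteq> {..<n}" using crun_sub n C_def by auto
  have crS: "crun n b (Suc m) = cstep n C (a - 1)" using C_def ba by simp
  have runS: "naples_run n (n-2) alpha (Suc m) = naples_step n (n-2) (Some L) a"
    using L(1) a_def by simp
  show ?case
  proof (cases "0 \<in> C")
    case True
    obtain x where x: "naples_step n (n-2) (Some L) a = Some (insert x L)" "x \<in> {1..n}" "x \<notin> L"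
      using step_general[OF L(2) cm a n] by blast
    have fin: "finite L" using L(2) finite_subset by blast
    have "0 \<in> crun n b (Suc m)" using True crS by (simp add: cstep_def)
    then show ?thesis using runS x L True fin C_def by auto
  next
    case False
    have LC: "L = Suc ` C" using L False C_def by auto
    have cC: "card C = m" using L(3) LC by (simp add: card_image)
    have st: "naples_step n (n-2) (Some L) a = Some (Suc ` cstep n C (a-1))"
    proof -
      have "card C \<le> n - 2" using cC cm L(3) by simp
      from step_match[OF Csub False this a n] show ?thesis using LC by simp
    qed
    have cc: "card (cstep n C (a-1)) = Suc m"
      using cstep_card[OF Csub, of "a - 1"] cC Suc.prems a by auto
    have cs: "cstep n C (a-1) \<subseteq> {..<n}" using Csub n by (auto simp: cstep_def)
    have "Suc ` cstep n C (a-1) \<subseteq> {1..n}" using cs by auto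
    moreover have "card (Suc ` cstep n C (a-1)) = Suc m" using cc by (simp add: card_image)
    ultimately show ?thesis using runS crS st by auto
  qed
qed

lemma fail_iff:
  fixes n :: nat and alpha :: "nat \<Rightarrow> nat"
  assumes n: "n \<ge> 2" and al: "alpha \<in> PP n"
  shows "naples_run n (n-2) alpha n = None \<longleftrightarrow> alpha n = n \<and> 0 \<notin> crun n (\<lambda>i. alpha i - 1) (n-1)"
proof -
  have al': "\<forall>i\<in>{1..n}. alpha i \<in> {1..n}" using al by (auto simp: PP_def PiE_def Pi_def)
  obtain L where L: "naples_run n (n-2) alpha (n-1) = Some L" "L \<subseteq> {1..n}" "card L = n-1"
    "0 \<notin> crun n (\<lambda>i. alpha i - 1) (n-1) \<longrightarrow> L = Suc ` crun n (\<lambda>i. alpha i - 1) (n-1)"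
    "0 \<in> crun n (\<lambda>i. alpha i - 1) (n-1) \<longrightarrow> 1 \<in> L"
  proof -
    have A: "\<forall>i\<in>{1..n-1}. alpha i \<in> {1..n}" using al' by auto
    have B: "\<forall>i\<in>{1..n-1}. (\<lambda>i. alpha i - 1) i = alpha i - 1" by simp
    from inv[OF n order_refl A B] show ?thesis using that by blast
  qed
  obtain m' where m': "n = Suc m'" using n by (cases n) auto
  have "naples_run n (n-2) alpha (Suc m') = naples_step n (n-2) (naples_run n (n-2) alpha m') (alpha (Suc m'))"
    by simp
  then have R: "naples_run n (n-2) alpha n = naples_step n (n-2) (Some L) (alpha n)"
    using L(1) m' by simp
  have an: "alpha n \<in> {1..n}" using al' n by auto
  have "1 \<notin> L \<longleftrightarrow> 0 \<notin> crun n (\<lambda>i. alpha i - 1) (n-1)" using L by auto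
  then show ?thesis using R step_final[OF L(2) L(3) an n] by simp
qed

definition XX :: "nat \<Rightarrow> (nat \<Rightarrow> nat) set" where "XX n = {1..n-1} \<rightarrow>\<^sub>E {..<n}"
definition GG :: "nat \<Rightarrow> nat \<Rightarrow> (nat \<Rightarrow> nat) set" where "GG n j = {\<beta>\<in>XX n. j \<notin> crun n \<beta> (n-1)}"

lemma XX_vals: "\<beta> \<in> XX n \<Longrightarrow> \<forall>i\<in>{1..n-1}. \<beta> i < n"
  by (auto simp: XX_def PiE_def Pi_def)

lemma finite_XX: "finite (XX n)" by (simp add: XX_def finite_PiE)

lemma card_XX: "card (XX n) = n ^ (n - 1)" by (simp add: XX_def card_PiE)

lemma F_props:
  assumes "\<beta> \<in> XX n" "n \<ge> 2"
  shows "crun n \<beta> (n-1) \<subseteq> {..<n}" "card (crun n \<beta> (n-1)) = n - 1"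
  using crun_sub[of n \<beta> "n-1"] crun_card[of "n-1" \<beta> n] XX_vals[OF assms(1)] assms(2) by auto

lemma G_le:
  assumes n: "n \<ge> 2" and ij: "i < n" "j < n"
  shows "card (GG n i) \<le> card (GG n j)"
proof -
  define c where "c = (j + n - i) mod n"
  define r where "r = (\<lambda>x. (x + c) mod n)"
  define rot where "rot = (\<lambda>\<beta> t. if t \<in> {1..n-1} then (\<beta> t + c) mod n else undefined)"
  have ri: "r i = j"
  proof -
    have "r i = (i + (j + n - i)) mod n" unfolding r_def c_def by (simp add: mod_add_right_eq)
    also have "i + (j + n - i) = j + n" using ij by simp
    finally show ?thesis using ij by simp
  qed
  have rotX: "rot \<beta> \<in> XX n" for \<beta> using n unfolding rot_def XX_def by (auto simp: PiE_def Pi_def extensional_def)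
  have Frot: "crun n (rot \<beta>) (n-1) = r ` crun n \<beta> (n-1)" if "\<beta> \<in> XX n" for \<beta>
  proof -
    have "crun n (rot \<beta>) (n-1) = crun n (\<lambda>t. (\<beta> t + c) mod n) (n-1)"
      by (rule crun_cong) (auto simp: rot_def)
    also have "\<dots> = r ` crun n \<beta> (n-1)" unfolding r_def
      using crun_rot[of "n-1" \<beta> n c] XX_vals[OF that] n by auto
    finally show ?thesis .
  qed
  have inj: "inj_on rot (GG n i)"
  proof (rule inj_onI)
    fix \<beta>1 \<beta>2 assume b: "\<beta>1 \<in> GG n i" "\<beta>2 \<in> GG n i" "rot \<beta>1 = rot \<beta>2"
    have X: "\<beta>1 \<in> XX n" "\<beta>2 \<in> XX n" using b unfolding GG_def by blast+
    show "\<beta>1 = \<beta>2"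
    proof
      fix t show "\<beta>1 t = \<beta>2 t"
      proof (cases "t \<in> {1..n-1}")
        case True
        have "rot \<beta>1 t = rot \<beta>2 t" using b(3) by simp
        then have "(\<beta>1 t + c) mod n = (\<beta>2 t + c) mod n" using True unfolding rot_def by simp
        then show ?thesis using rot_inj[of "\<beta>1 t" n "\<beta>2 t" c] XX_vals[OF X(1)] XX_vals[OF X(2)] True by auto
      next
        case False
        then show ?thesis using PiE_arb[OF X(1)[unfolded XX_def] False] PiE_arb[OF X(2)[unfolded XX_def] False] by simp
      qed
    qed
  qed
  have img: "rot ` GG n i \<subseteq> GG n j"
  proof
    fix \<gamma> assume "\<gamma> \<in> rot ` GG n i"
    then obtain \<beta> where b: "\<beta> \<in> GG n i" "\<gamma> = rot \<beta>" by blast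
    have X: "\<beta> \<in> XX n" and ni: "i \<notin> crun n \<beta> (n-1)" using b unfolding GG_def by blast+
    have "j \<notin> r ` crun n \<beta> (n-1)"
    proof
      assume "j \<in> r ` crun n \<beta> (n-1)"
      then obtain y where y: "y \<in> crun n \<beta> (n-1)" "r y = j" by auto
      have "y < n" using y F_props[OF X n] by auto
      then have "y = i" using rot_inj[of y n i c] y ri ij unfolding r_def by auto
      then show False using y ni by simp
    qed
    then show "\<gamma> \<in> GG n j" using b Frot[OF X] rotX GG_def by auto
  qed
  have "finite (GG n j)" using finite_XX GG_def by auto
  then show ?thesis using card_inj_on_le[OF inj img] by simp
qed

lemma sum_G:
  assumes n: "n \<ge> 2"
  shows "(\<Sum>j<n. card (GG n j)) = card (XX n)"
proof -
  have "card (GG n j) = (\<Sum>\<beta>\<in>XX n. if j \<notin> crun n \<beta> (n-1) then 1 else 0)" for j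
    unfolding GG_def using finite_XX by (simp add: sum.inter_filter[symmetric])
  then have "(\<Sum>j<n. card (GG n j)) = (\<Sum>j<n. \<Sum>\<beta>\<in>XX n. if j \<notin> crun n \<beta> (n-1) then 1 else 0)" by simp
  also have "\<dots> = (\<Sum>\<beta>\<in>XX n. \<Sum>j<n. if j \<notin> crun n \<beta> (n-1) then 1 else 0)" by (rule sum.swap)
  also have "\<dots> = (\<Sum>\<beta>\<in>XX n. 1)"
  proof (rule sum.cong)
    fix \<beta> assume X: "\<beta> \<in> XX n"
    have "(\<Sum>j<n. if j \<notin> crun n \<beta> (n-1) then 1 else 0) = card {j\<in>{..<n}. j \<notin> crun n \<beta> (n-1)}"
      by (simp add: sum.inter_filter[symmetric])
    also have "{j\<in>{..<n}. j \<notin> crun n \<beta> (n-1)} = {..<n} - crun n \<beta> (n-1)" by auto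
    also have "card \<dots> = n - (n - 1)" using F_props[OF X n]
      by (simp add: card_Diff_subset finite_subset)
    also have "\<dots> = 1" using n by simp
    finally show "(\<Sum>j<n. if j \<notin> crun n \<beta> (n-1) then 1 else 0) = (1::nat)" .
  qed simp
  also have "\<dots> = card (XX n)" by simp
  finally show ?thesis .
qed

lemma card_G0:
  assumes n: "n \<ge> 2"
  shows "card (GG n 0) = n ^ (n - 2)"
proof -
  have E: "card (GG n j) = card (GG n 0)" if "j \<in> {..<n}" for j
  proof -
    have n0: "0 < n" using n by simp
    have jn: "j < n" using that by simp
    have "card (GG n j) \<le> card (GG n 0)" using G_le[OF n jn n0] .
    moreover have "card (GG n 0) \<le> card (GG n j)" using G_le[OF n n0 jn] .
    ultimately show ?thesis by simp
  qed
  have "(\<Sum>j<n. card (GG n j)) = (\<Sum>j<n. card (GG n 0))" by (rule sum.cong[OF refl E])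
  then have "(\<Sum>j<n. card (GG n j)) = n * card (GG n 0)" by simp
  then have "n * card (GG n 0) = n ^ (n-1)" using sum_G[OF n] card_XX by simp
  moreover have "n ^ (n - 1) = n * n ^ (n - 2)"
  proof -
    have "n - 1 = Suc (n - 2)" using n by simp
    then show ?thesis by simp
  qed
  ultimately show ?thesis using n by simp
qed

definition FS :: "nat \<Rightarrow> (nat \<Rightarrow> nat) set" where
  "FS n = {alpha \<in> PP n. alpha n = n \<and> 0 \<notin> crun n (\<lambda>i. alpha i - 1) (n-1)}"

lemma card_FS:
  assumes n: "n \<ge> 2"
  shows "card (FS n) = n ^ (n - 2)"
proof -
  define f :: "(nat \<Rightarrow> nat) \<Rightarrow> nat \<Rightarrow> nat" where "f = (\<lambda>alpha i. if i \<in> {1..n-1} then alpha i - 1 else undefined)"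
  define g :: "(nat \<Rightarrow> nat) \<Rightarrow> nat \<Rightarrow> nat" where "g = (\<lambda>\<beta> i. if i \<in> {1..n-1} then \<beta> i + 1 else if i = n then n else undefined)"
  have cf: "crun n (f alpha) (n-1) = crun n (\<lambda>i. alpha i - 1) (n-1)" for alpha
    by (rule crun_cong) (simp add: f_def)
  have cg: "crun n (\<lambda>i. g \<beta> i - 1) (n-1) = crun n \<beta> (n-1)" for \<beta>
    by (rule crun_cong) (simp add: g_def)
  have "bij_betw f (FS n) (GG n 0)"
  proof (rule bij_betw_byWitness[where f'=g])
    show "\<forall>a\<in>FS n. g (f a) = a"
    proof
      fix a assume a: "a \<in> FS n"
      then have aP: "a \<in> PP n" "a n = n" unfolding FS_def by blast+
      have aP': "a \<in> {1..n} \<rightarrow>\<^sub>E {1..n}" using aP(1) unfolding PP_def .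
      show "g (f a) = a"
      proof
        fix i show "g (f a) i = a i"
        proof (cases "i \<in> {1..n-1}")
          case True
          then have "i \<in> {1..n}" by auto
          then have "a i \<in> {1..n}" using aP' by blast
          then show ?thesis using True by (simp add: f_def g_def)
        next
          case False
          show ?thesis
          proof (cases "i = n")
            case True
            then show ?thesis using aP(2) False by (auto simp: g_def)
          next
            case F2: False
            then have "i \<notin> {1..n}" using False by auto
            from PiE_arb[OF aP' this] show ?thesis using False F2 by (auto simp: g_def)
          qed
        qed
      qed
    qed
    show "\<forall>a'\<in>GG n 0. f (g a') = a'"
    proof
      fix b assume b: "b \<in> GG n 0"
      then have X: "b \<in> {1..n-1} \<rightarrow>\<^sub>E {..<n}" unfolding GG_def XX_def by blast
      show "f (g b) = b"
      proof
        fix i show "f (g b) i = b i"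
        proof (cases "i \<in> {1..n-1}")
          case True then show ?thesis by (simp add: f_def g_def)
        next
          case False
          from PiE_arb[OF X False] show ?thesis using False by (auto simp: f_def)
        qed
      qed
    qed
    show "f ` FS n \<subseteq> GG n 0"
    proof
      fix x assume "x \<in> f ` FS n"
      then obtain a where a: "a \<in> FS n" "x = f a" by blast
      then have aP: "a \<in> {1..n} \<rightarrow>\<^sub>E {1..n}" "0 \<notin> crun n (\<lambda>i. a i - 1) (n-1)"
        unfolding FS_def PP_def by blast+
      have "f a \<in> XX n" unfolding XX_def
      proof (rule PiE_I)
        fix t assume t: "t \<in> {1..n-1}"
        then have "t \<in> {1..n}" by auto
        then have "a t \<in> {1..n}" using aP(1) by blast
        then show "f a t \<in> {..<n}" using t by (auto simp: f_def)
      next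
        fix t assume "t \<notin> {1..n-1}" then show "f a t = undefined" by (auto simp: f_def)
      qed
      then show "x \<in> GG n 0" using a(2) aP(2) cf unfolding GG_def by simp
    qed
    show "g ` GG n 0 \<subseteq> FS n"
    proof
      fix x assume "x \<in> g ` GG n 0"
      then obtain b where b: "b \<in> GG n 0" "x = g b" by blast
      then have X: "b \<in> {1..n-1} \<rightarrow>\<^sub>E {..<n}" and nb: "0 \<notin> crun n b (n-1)"
        unfolding GG_def XX_def by blast+
      have "g b \<in> PP n" unfolding PP_def
      proof (rule PiE_I)
        fix t assume t: "t \<in> {1..n}"
        show "g b t \<in> {1..n}"
        proof (cases "t \<in> {1..n-1}")
          case True
          then have "b t \<in> {..<n}" using X by blast
          then show ?thesis using True by (simp add: g_def)
        next
          case False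
          then have "t = n" using t by auto
          then show ?thesis using False n by (simp add: g_def)
        qed
      next
        fix t assume "t \<notin> {1..n}" then show "g b t = undefined" using n by (auto simp: g_def)
      qed
      moreover have "g b n = n" using n by (auto simp: g_def)
      ultimately show "x \<in> FS n" using b(2) nb cg unfolding FS_def by simp
    qed
  qed
  from bij_betw_same_card[OF this] show ?thesis using card_G0[OF n] by simp
qed

theorem corollary2p4:
  fixes n :: nat
  assumes "n \<ge> 2"
  shows "int (card (PF n (n - 2))) = int n ^ n - int n ^ (n - 2)"
proof -
  have PFe: "PF n (n - 2) = PP n - FS n"
  proof (rule set_eqI)
    fix \<alpha> show "\<alpha> \<in> PF n (n - 2) \<longleftrightarrow> \<alpha> \<in> PP n - FS n"
    proof (cases "\<alpha> \<in> PP n")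
      case True then show ?thesis using fail_iff[OF assms True] by (auto simp: PF_def FS_def)
    qed (auto simp: PF_def FS_def)
  qed
  have fin: "finite (PP n)" unfolding PP_def by (rule finite_PiE) auto
  have sub: "FS n \<subseteq> PP n" unfolding FS_def by blast
  have cPP: "card (PP n) = n ^ n" unfolding PP_def by (simp add: card_PiE)
  have "card (PF n (n - 2)) = card (PP n - FS n)" using PFe by simp
  also have "\<dots> = card (PP n) - card (FS n)"
    by (rule card_Diff_subset[OF finite_subset[OF sub fin] sub])
  finally have c: "card (PF n (n - 2)) = n ^ n - n ^ (n - 2)" using cPP card_FS[OF assms] by simp
  have le: "n ^ (n - 2) \<le> n ^ n" by (rule power_increasing) (use assms in auto)
  have "int (card (PF n (n - 2))) = int (n ^ n - n ^ (n - 2))" using c by simp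
  also have "\<dots> = int (n ^ n) - int (n ^ (n - 2))" using le by (rule of_nat_diff)
  also have "\<dots> = int n ^ n - int n ^ (n - 2)" by (simp only: of_nat_power)
  finally show ?thesis .
qed

end
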